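(* Let $\gamma\in V$ be an element of infinite order. Then there is a non-empty open $\gamma$-wandering subset of $S^1$.
   Context: $S^1$ is the interval $[0,1]$ with $0$ and $1$ identified. Thompson's group $V$ is the group of left-continuous bijections of $S^1$ which map finite dyadic fractions to finite dyadic fractions, are differentiable except at finitely many finite dyadic fractions, and on each maximal interval of differentiability are linear with slope an integer power of $2$. For $\gamma\in V$, a subset $U\subseteq S^1$ is $\gamma$-wandering if for every $n\in\mathbb{Z}$ with $\gamma^n\neq e$ we have $\gamma^n(U)\cap U=\emptyset$. *)

theory Defs
  imports "HOL-Analysis.Analysis"
begin

(* S^1 = [0,1] with 0 ~ 1, represented by the half-open interval (0,1];
   the point 0 = 1 of the circle is represented by 1. *)
definition circle :: "real set" where
  "circle = {0<..1}"

(* quotient map R -> S^1 = R/Z with values in (0,1] *)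
definition circ_proj :: "real \<Rightarrow> real" where
  "circ_proj x = x - of_int (ceiling x) + 1"

definition circle_open :: "real set \<Rightarrow> bool" where
  "circle_open U \<longleftrightarrow> U \<subseteq> circle \<and> open (circ_proj -` U)"

definition dyadic :: "real \<Rightarrow> bool" where
  "dyadic x \<longleftrightarrow> (\<exists>(m::int) (n::nat). x = of_int m / 2 ^ n)"

(* Thompson's group V: bijections of S^1 (extended by the identity outside (0,1]),
   mapping dyadics to dyadics, and affine with slope a power of 2 on each piece
   (a,b] of a finite dyadic subdivision of (0,1] (pieces half-open on the left:
   left-continuity). *)
definition thompsonV :: "(real \<Rightarrow> real) set" where
  "thompsonV = {f. bij_betw f circle circle
      \<and> (\<forall>x. x \<notin> circle \<longrightarrow> f x = x)
      \<and> (\<forall>x\<in>circle. dyadic x \<longrightarrow> dyadic (f x))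
      \<and> (\<exists>D. finite D \<and> D \<subseteq> circle \<and> 1 \<in> D \<and> (\<forall>d\<in>D. dyadic d)
           \<and> (\<forall>a b. a \<in> insert 0 D \<and> b \<in> D \<and> a < b \<and> {a<..<b} \<inter> D = {} \<longrightarrow>
                 (\<exists>(k::int) c. \<forall>x\<in>{a<..b}. f x = 2 powr (real_of_int k) * x + c)))}"

definition vinv :: "(real \<Rightarrow> real) \<Rightarrow> real \<Rightarrow> real" where
  "vinv f = (\<lambda>x. if x \<in> circle then inv_into circle f x else x)"

definition vpow :: "(real \<Rightarrow> real) \<Rightarrow> int \<Rightarrow> real \<Rightarrow> real" where
  "vpow f n = (if 0 \<le> n then f ^^ nat n else vinv f ^^ nat (- n))"

definition infinite_order :: "(real \<Rightarrow> real) \<Rightarrow> bool" where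
  "infinite_order f \<longleftrightarrow> (\<forall>n::nat. 0 < n \<longrightarrow> f ^^ n \<noteq> id)"

definition wandering :: "(real \<Rightarrow> real) \<Rightarrow> real set \<Rightarrow> bool" where
  "wandering f U \<longleftrightarrow> (\<forall>n::int. vpow f n \<noteq> id \<longrightarrow> vpow f n ` U \<inter> U = {})"

end

theory Submission
  imports Defs
begin


abbreviation p2 :: "int \<Rightarrow> real" where "p2 l \<equiv> 2 powr real_of_int l"

definition dcone :: "int \<Rightarrow> real \<Rightarrow> real set" where
  "dcone l x = {w. \<lceil>w * p2 l\<rceil> = \<lceil>x * p2 l\<rceil>}"

lemma p2_pos[simp]: "0 < p2 l" by simp
lemma p2_add: "p2 (a + b) = p2 a * p2 b" by (simp add: powr_add)
lemma p2_nonneg_int: "0 \<le> l \<Longrightarrow> p2 l = 2 ^ nat l"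
  by (metis of_nat_nat powr_realpow zero_less_numeral of_int_of_nat_eq)
lemma p2_nonneg_Ints: "0 \<le> l \<Longrightarrow> p2 l \<in> \<int>"
  by (simp add: p2_nonneg_int)

lemma cone_self[simp]: "x \<in> dcone l x" by (simp add: dcone_def)

lemma cone_eq: "w \<in> dcone l x \<Longrightarrow> dcone l w = dcone l x"
  by (simp add: dcone_def)

lemma ceil_div_det:
  fixes t t' :: real and m :: int
  assumes "\<lceil>t\<rceil> = \<lceil>t'\<rceil>" "0 < m"
  shows "\<lceil>t / m\<rceil> = \<lceil>t' / m\<rceil>"
proof -
  have "\<lceil>s / m\<rceil> = - ((- \<lceil>s\<rceil>) div m)" for s :: real
  proof -
    have "\<lceil>s / m\<rceil> = - \<lfloor>(-s) / real_of_int m\<rfloor>" by (simp add: ceiling_def)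
    also have "\<lfloor>(-s) / real_of_int m\<rfloor> = \<lfloor>-s\<rfloor> div m"
      using assms(2) floor_divide_real_eq_div[of m "-s"] by simp
    finally show ?thesis by (simp add: ceiling_def)
  qed
  then show ?thesis using assms(1) by simp
qed

lemma cone_mono: assumes "l \<le> l'" shows "dcone l' x \<subseteq> dcone l x"
proof
  fix w assume "w \<in> dcone l' x"
  then have e: "\<lceil>w * p2 l'\<rceil> = \<lceil>x * p2 l'\<rceil>" by (simp add: dcone_def)
  have m: "p2 l' = p2 l * p2 (l' - l)" using p2_add[of l "l'-l"] by simp
  have pos: "0 < (2::int) ^ nat (l' - l)" by simp
  have q: "p2 (l' - l) = real_of_int ((2::int) ^ nat (l'-l))" using p2_nonneg_int[of "l'-l"] assms by (metis diff_ge_0_iff_ge of_int_numeral of_int_power)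
  have "\<lceil>(w * p2 l') / real_of_int ((2::int) ^ nat (l'-l))\<rceil> = \<lceil>(x * p2 l') / real_of_int ((2::int) ^ nat (l'-l))\<rceil>"
    by (rule ceil_div_det[OF e pos])
  then show "w \<in> dcone l x" unfolding dcone_def using m q by simp
qed

lemma cone_sub: "l \<le> l' \<Longrightarrow> w \<in> dcone l x \<Longrightarrow> dcone l' w \<subseteq> dcone l x"
  using cone_mono cone_eq by blast

lemma cone_nested_or_disjoint:
  assumes "dcone l x \<inter> dcone l' y \<noteq> {}"
  shows "dcone l x \<subseteq> dcone l' y \<or> dcone l' y \<subseteq> dcone l x"
proof -
  obtain z where z: "z \<in> dcone l x" "z \<in> dcone l' y" using assms by blast
  show ?thesis
  proof (cases "l \<le> l'")
    case True
    then have "dcone l' y \<subseteq> dcone l x" using cone_sub[OF True z(1)] cone_eq[OF z(2)] by simp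
    then show ?thesis by simp
  next
    case False
    then have "dcone l x \<subseteq> dcone l' y" using cone_sub[of l' l z y] z cone_eq[OF z(1)] by simp
    then show ?thesis by simp
  qed
qed

lemma cone_circle:
  assumes "x \<in> circle" "0 \<le> l" shows "dcone l x \<subseteq> circle"
proof
  fix w assume "w \<in> dcone l x"
  then have e: "\<lceil>w * p2 l\<rceil> = \<lceil>x * p2 l\<rceil>" by (simp add: dcone_def)
  have x: "0 < x" "x \<le> 1" using assms by (auto simp: circle_def)
  have pl: "p2 l = real_of_int (2 ^ nat l)" using assms(2) by (simp add: p2_nonneg_int)
  have "0 < x * p2 l" using x by simp
  then have "1 \<le> \<lceil>x * p2 l\<rceil>" by (simp add: zero_less_ceiling  int_one_le_iff_zero_less)
  moreover have "\<lceil>x * p2 l\<rceil> \<le> 2 ^ nat l"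
    using x pl by (simp add: ceiling_le_iff)
  ultimately have "1 \<le> \<lceil>w * p2 l\<rceil>" "\<lceil>w * p2 l\<rceil> \<le> 2 ^ nat l" using e by auto
  then have "0 < w * p2 l" "w * p2 l \<le> p2 l"
    using pl by (auto simp: ceiling_le_iff)
  then show "w \<in> circle" by (auto simp: circle_def zero_less_mult_iff)
qed

definition aff :: "(real \<Rightarrow> real) \<Rightarrow> int \<Rightarrow> real \<Rightarrow> int \<Rightarrow> real \<Rightarrow> bool" where
  "aff g N y k c \<longleftrightarrow> (\<forall>w\<in>dcone N y. g w = p2 k * w + c) \<and> c * p2 (N - k) \<in> \<int>"

definition grid :: "(real \<Rightarrow> real) \<Rightarrow> int \<Rightarrow> bool" where
  "grid g N \<longleftrightarrow> 0 \<le> N \<and> bij_betw g circle circle \<and> (\<forall>y\<in>circle. \<exists>k c. aff g N y k c)"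

definition kf :: "(real \<Rightarrow> real) \<Rightarrow> int \<Rightarrow> real \<Rightarrow> int" where
  "kf g N y = (SOME k. \<exists>c. aff g N y k c)"

definition ss :: "(real \<Rightarrow> real) \<Rightarrow> int \<Rightarrow> real \<Rightarrow> nat \<Rightarrow> int" where
  "ss g N x n = (\<Sum>i<n. kf g N ((g^^i) x))"

lemma ss_0[simp]: "ss g N x 0 = 0" by (simp add: ss_def)
lemma ss_Suc: "ss g N x (Suc n) = ss g N x n + kf g N ((g^^n) x)" by (simp add: ss_def)

lemma kf_cone: assumes "w \<in> dcone N y" shows "kf g N w = kf g N y"
proof -
  have "dcone N w = dcone N y" using assms by (rule cone_eq)
  then show ?thesis by (simp add: kf_def aff_def)
qed

lemma grid_circ: "grid g N \<Longrightarrow> x \<in> circle \<Longrightarrow> g x \<in> circle"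
  unfolding grid_def bij_betw_def by blast

lemma grid_funpow_circ: "grid g N \<Longrightarrow> x \<in> circle \<Longrightarrow> (g^^n) x \<in> circle"
  by (induction n) (auto simp: grid_circ)

lemma kf_aff: assumes "grid g N" "y \<in> circle" shows "\<exists>c. aff g N y (kf g N y) c"
proof -
  have "\<exists>k c. aff g N y k c" using assms by (simp add: grid_def)
  then show ?thesis unfolding kf_def by (rule someI_ex)
qed

lemma step_lemma:
  assumes G: "grid g N" and y: "y \<in> circle" and L: "N \<le> L"
  shows "g ` dcone L y = dcone (L - kf g N y) (g y)"
proof -
  define k where "k = kf g N y"
  obtain c where A: "aff g N y k c" using kf_aff[OF G y] k_def by blast
  have aff: "\<And>w. w \<in> dcone N y \<Longrightarrow> g w = p2 k * w + c" and ci: "c * p2 (N - k) \<in> \<int>"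
    using A by (auto simp: aff_def)
  have "p2 (L - N) \<in> \<int>" using L by (intro p2_nonneg_Ints) simp
  then have "c * p2 (N - k) * p2 (L - N) \<in> \<int>" using ci by (rule Ints_mult[rotated])
  moreover have "p2 (N - k) * p2 (L - N) = p2 (L - k)" using p2_add[of "N-k" "L-N"] by simp
  ultimately obtain m where m: "c * p2 (L - k) = of_int m"
    by (metis Ints_cases mult.assoc)
  have key: "\<lceil>(p2 k * w + c) * p2 (L - k)\<rceil> = \<lceil>w * p2 L\<rceil> + m" for w
  proof -
    have "(p2 k * w + c) * p2 (L - k) = w * (p2 k * p2 (L - k)) + c * p2 (L - k)"
      by (simp add: algebra_simps)
    also have "p2 k * p2 (L - k) = p2 L" using p2_add[of k "L-k"] by simp
    finally show ?thesis using m by simp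
  qed
  have sub: "dcone L y \<subseteq> dcone N y" using L by (rule cone_mono)
  have gy: "g y = p2 k * y + c" using aff by simp
  show ?thesis unfolding k_def[symmetric]
  proof
    show "g ` dcone L y \<subseteq> dcone (L - k) (g y)"
    proof
      fix z assume "z \<in> g ` dcone L y"
      then obtain w where w: "w \<in> dcone L y" "z = g w" by blast
      then have "z = p2 k * w + c" using aff sub by blast
      then show "z \<in> dcone (L - k) (g y)" using w(1) key[of w] key[of y] gy by (simp add: dcone_def)
    qed
  next
    show "dcone (L - k) (g y) \<subseteq> g ` dcone L y"
    proof
      fix z assume z: "z \<in> dcone (L - k) (g y)"
      define w where "w = (z - c) / p2 k"
      have zw: "z = p2 k * w + c" by (simp add: w_def)
      have "w \<in> dcone L y" using z key[of w] key[of y] gy zw by (simp add: dcone_def)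
      moreover then have "g w = z" using aff sub zw by blast
      ultimately show "z \<in> g ` dcone L y" by blast
    qed
  qed
qed

lemma step_aff:
  assumes G: "grid g N" and y: "y \<in> circle" and L: "N \<le> L"
  shows "\<exists>c. \<forall>w\<in>dcone L y. g w = p2 (kf g N y) * w + c"
proof -
  obtain c where A: "aff g N y (kf g N y) c" using kf_aff[OF G y] by blast
  then show ?thesis using cone_mono[OF L] unfolding aff_def by blast
qed





lemma orbit_lemma:
  assumes G: "grid g N" and x: "x \<in> circle" and L: "N \<le> L"
  shows "(\<forall>i<n. N \<le> L - ss g N x i) \<Longrightarrow>
     (g^^n) ` dcone L x = dcone (L - ss g N x n) ((g^^n) x) \<and>
     (\<exists>c. \<forall>w\<in>dcone L x. (g^^n) w = p2 (ss g N x n) * w + c) \<and>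
     (\<forall>w\<in>dcone L x. \<forall>i\<le>n. ss g N w i = ss g N x i)"
proof (induction n)
  case 0
  then show ?case by simp
next
  case (Suc n)
  have "\<forall>i<n. N \<le> L - ss g N x i" using Suc.prems by simp
  note IH0 = Suc.IH[OF this]
  note IH = IH0[THEN conjunct1] IH0[THEN conjunct2, THEN conjunct1] IH0[THEN conjunct2, THEN conjunct2]
  define y where "y = (g^^n) x"
  define L' where "L' = L - ss g N x n"
  have y: "y \<in> circle" using grid_funpow_circ[OF G x] y_def by simp
  have L': "N \<le> L'" using Suc.prems L'_def by simp
  have "(g^^Suc n) ` dcone L x = g ` ((g^^n) ` dcone L x)" by (simp add: image_comp)
  then have img: "(g^^Suc n) ` dcone L x = g ` dcone L' y" using IH(1) unfolding L'_def y_def by simp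
  have inL': "(g^^n) w \<in> dcone L' y" if "w \<in> dcone L x" for w
  proof -
    have "(g^^n) w \<in> (g^^n) ` dcone L x" using that by (rule imageI)
    then show ?thesis using IH(1) unfolding L'_def y_def by simp
  qed
  have 1: "(g^^Suc n) ` dcone L x = dcone (L - ss g N x (Suc n)) ((g^^Suc n) x)"
  proof -
    have e1: "L - ss g N x (Suc n) = L' - kf g N y" by (simp add: ss_Suc L'_def y_def)
    have e2: "(g^^Suc n) x = g y" by (simp add: y_def)
    show ?thesis unfolding e1 e2 img by (rule step_lemma[OF G y L'])
  qed
  obtain c where c: "\<forall>w\<in>dcone L x. (g^^n) w = p2 (ss g N x n) * w + c" using IH(2) by blast
  obtain c' where c': "\<forall>w\<in>dcone L' y. g w = p2 (kf g N y) * w + c'" using step_aff[OF G y L'] by blast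
  have 2: "\<exists>c. \<forall>w\<in>dcone L x. (g^^Suc n) w = p2 (ss g N x (Suc n)) * w + c"
  proof (intro exI ballI)
    fix w assume w: "w \<in> dcone L x"
    have "(g^^n) w \<in> dcone L' y" by (rule inL'[OF w])
    then have "(g^^Suc n) w = p2 (kf g N y) * (p2 (ss g N x n) * w + c) + c'"
      using c c' w by simp
    also have "\<dots> = p2 (ss g N x (Suc n)) * w + (p2 (kf g N y) * c + c')"
    proof -
      have "p2 (ss g N x (Suc n)) = p2 (ss g N x n) * p2 (kf g N y)"
        unfolding ss_Suc y_def by (rule p2_add)
      then show ?thesis by (simp add: distrib_left)
    qed
    finally show "(g^^Suc n) w = p2 (ss g N x (Suc n)) * w + (p2 (kf g N y) * c + c')" .
  qed
  have 3: "\<forall>w\<in>dcone L x. \<forall>i\<le>Suc n. ss g N w i = ss g N x i"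
  proof (intro ballI allI impI)
    fix w i assume w: "w \<in> dcone L x" and i: "i \<le> Suc n"
    show "ss g N w i = ss g N x i"
    proof (cases "i \<le> n")
      case True then show ?thesis using IH(3) w by blast
    next
      case False
      then have i: "i = Suc n" using i by simp
      have "(g^^n) w \<in> dcone L' y" by (rule inL'[OF w])
      then have "(g^^n) w \<in> dcone N y" using cone_mono[OF L'] by blast
      then have "kf g N ((g^^n) w) = kf g N y" by (rule kf_cone)
      moreover have "ss g N w n = ss g N x n" using IH(3) w by blast
      ultimately show ?thesis using i by (simp add: ss_Suc y_def)
    qed
  qed
  show ?case using 1 2 3 by blast
qed




definition fwd_wand :: "(real \<Rightarrow> real) \<Rightarrow> real set \<Rightarrow> bool" where
  "fwd_wand g B \<longleftrightarrow> (\<forall>n\<ge>1. (g^^n) ` B \<inter> B = {})"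

lemma funpow_mult_image_sub:
  assumes "(f^^n) ` B \<subseteq> B" shows "(f^^(n*m)) ` B \<subseteq> B"
proof (induction m)
  case 0 then show ?case by simp
next
  case (Suc m)
  have e: "n * Suc m = n*m + n" by simp
  have "(f^^(n * Suc m)) ` B = (f^^(n*m)) ` ((f^^n) ` B)"
    unfolding e funpow_add by (simp add: image_comp)
  also have "\<dots> \<subseteq> (f^^(n*m)) ` B" using assms by (rule image_mono)
  finally show ?case using Suc.IH by simp
qed

lemma funpow_mult_image_sup:
  assumes "B \<subseteq> (f^^n) ` B" shows "B \<subseteq> (f^^(n*m)) ` B"
proof (induction m)
  case 0 then show ?case by simp
next
  case (Suc m)
  have e: "n * Suc m = n*m + n" by simp
  have "(f^^(n * Suc m)) ` B = (f^^(n*m)) ` ((f^^n) ` B)"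
    unfolding e funpow_add by (simp add: image_comp)
  moreover have "(f^^(n*m)) ` B \<subseteq> (f^^(n*m)) ` ((f^^n) ` B)" using assms by (rule image_mono)
  ultimately show ?case using Suc.IH by simp
qed

lemma abs_wand:
  assumes ne: "B \<noteq> {}" and p: "p \<ge> 1"
    and W: "\<forall>q\<ge>1. (g^^(p*q)) ` B \<inter> B = {}"
    and F: "\<forall>n. (g^^n) ` B \<inter> B \<noteq> {} \<longrightarrow> (g^^n) ` B \<subseteq> B \<or> B \<subseteq> (g^^n) ` B"
  shows "fwd_wand g B"
  unfolding fwd_wand_def
proof (intro allI impI)
  fix n :: nat assume n: "n \<ge> 1"
  show "(g^^n) ` B \<inter> B = {}"
  proof (rule ccontr)
    assume "(g^^n) ` B \<inter> B \<noteq> {}"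
    then have c: "(g^^n) ` B \<subseteq> B \<or> B \<subseteq> (g^^n) ` B" using F by blast
    have d: "(g^^(n*p)) ` B \<inter> B = {}" using W n by (metis mult.commute)
    from c show False
    proof
      assume "(g^^n) ` B \<subseteq> B"
      then have "(g^^(n*p)) ` B \<subseteq> B" by (rule funpow_mult_image_sub)
      then show False using d ne by blast
    next
      assume "B \<subseteq> (g^^n) ` B"
      then have "B \<subseteq> (g^^(n*p)) ` B" by (rule funpow_mult_image_sup)
      then show False using d ne by blast
    qed
  qed
qed

lemma ss_add: "ss g N x (a + b) = ss g N x a + ss g N ((g^^a) x) b"
proof (induction b)
  case 0 then show ?case by simp
next
  case (Suc b)
  have "(g^^(a+b)) x = (g^^b) ((g^^a) x)" by (metis add.commute funpow_add o_apply)
  then show ?case using Suc.IH by (simp add: ss_Suc)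
qed

lemma contraction_wand:
  assumes G: "grid g N" and y: "y \<in> circle" and p: "p \<ge> 1"
    and neg: "\<forall>i. 1 \<le> i \<and> i \<le> p \<longrightarrow> ss g N y i < 0"
    and ret: "dcone N ((g^^p) y) = dcone N y"
  shows "\<exists>z\<in>circle. fwd_wand g (dcone (N+1) z)"
proof -
  define Q where "Q = dcone N y"
  have N0: "0 \<le> N" using G by (simp add: grid_def)
  have Qc: "Q \<subseteq> circle" unfolding Q_def using y N0 by (rule cone_circle)
  have le0: "ss g N y i \<le> 0" if "i \<le> p" for i
  proof (cases "i = 0")
    case False then have "ss g N y i < 0" using neg that by simp
    then show ?thesis by simp
  qed simp
  have OL: "(g^^p) ` Q = dcone (N - ss g N y p) ((g^^p) y) \<and>
     (\<exists>c. \<forall>w\<in>Q. (g^^p) w = p2 (ss g N y p) * w + c) \<and>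
     (\<forall>w\<in>Q. \<forall>i\<le>p. ss g N w i = ss g N y i)"
    unfolding Q_def by (rule orbit_lemma[OF G y order_refl]) (use le0 in auto)
  define w' where "w' = (g^^p) y"
  have sp: "ss g N y p < 0" using neg p by auto
  have imgQ: "(g^^p) ` Q \<subseteq> dcone (N+1) w'"
    using OL cone_mono[of "N+1" "N - ss g N y p" w'] sp unfolding w'_def by auto
  have w'Q: "dcone (N+1) w' \<subseteq> Q" using cone_mono[of N "N+1" w'] ret unfolding Q_def w'_def by simp
  have Qinv: "(g^^p) ` Q \<subseteq> Q" using imgQ w'Q by blast
  have sseq: "\<And>w i. w \<in> Q \<Longrightarrow> i \<le> p \<Longrightarrow> ss g N w i = ss g N y i" using OL by blast
  have allneg: "\<forall>w\<in>Q. ss g N w n \<le> 0" for n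
  proof (induction n rule: less_induct)
    case (less n)
    show ?case
    proof
      fix w assume w: "w \<in> Q"
      show "ss g N w n \<le> 0"
      proof (cases "n \<le> p")
        case True then show ?thesis using sseq[OF w True] le0[OF True] by simp
      next
        case False
        then obtain m where m: "n = p + m" "m < n" using p by (metis le_add_diff_inverse less_imp_le_nat nat_le_linear diff_less less_le_trans zero_less_one)
        have "(g^^p) w \<in> Q" using Qinv w by blast
        then have "ss g N ((g^^p) w) m \<le> 0" using less.IH[OF m(2)] by blast
        moreover have "ss g N w p < 0" using sseq[OF w order_refl] sp by simp
        ultimately show ?thesis using ss_add[of g N w p m] m(1) by simp
      qed
    qed
  qed
  define j where "j = \<lceil>y * p2 N\<rceil>"
  have p21: "p2 (N+1) = 2 * p2 N" using p2_add[of N 1] by simp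
  define z1 where "z1 = real_of_int j / p2 N"
  define z2 where "z2 = (real_of_int j - 1/2) / p2 N"
  have z1Q: "z1 \<in> Q" unfolding Q_def dcone_def z1_def j_def by simp
  have z2Q: "z2 \<in> Q" unfolding Q_def dcone_def z2_def j_def by (simp add: ceiling_eq_iff)
  have c1: "\<lceil>z1 * p2 (N+1)\<rceil> = 2 * j" proof -
    have "z1 * p2 (N+1) = real_of_int (2 * j)" unfolding z1_def p21 by (simp add: field_simps)
    then show ?thesis by (simp only: ceiling_of_int)
  qed
  have c2: "\<lceil>z2 * p2 (N+1)\<rceil> = 2 * j - 1" proof -
    have "z2 * p2 (N+1) = real_of_int (2 * j - 1)" unfolding z2_def p21 by (simp add: field_simps)
    then show ?thesis by (simp only: ceiling_of_int)
  qed
  obtain z where zQ: "z \<in> Q" and zd: "\<lceil>z * p2 (N+1)\<rceil> \<noteq> \<lceil>w' * p2 (N+1)\<rceil>"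
  proof (cases "\<lceil>w' * p2 (N+1)\<rceil> = 2 * j")
    case True
    then have "\<lceil>z2 * p2 (N+1)\<rceil> \<noteq> \<lceil>w' * p2 (N+1)\<rceil>" using c2 by simp
    then show ?thesis using that z2Q by blast
  next
    case False
    then have "\<lceil>z1 * p2 (N+1)\<rceil> \<noteq> \<lceil>w' * p2 (N+1)\<rceil>" using c1 by simp
    then show ?thesis using that z1Q by blast
  qed
  define B where "B = dcone (N+1) z"
  have zc: "z \<in> circle" using zQ Qc by blast
  have BQ: "B \<subseteq> Q" unfolding B_def using cone_sub[of N "N+1" z y] zQ unfolding Q_def by simp
  have Bdis: "B \<inter> dcone (N+1) w' = {}" unfolding B_def dcone_def using zd by auto
  have Qpow: "(g^^(p*q)) ` Q \<subseteq> Q" for q using Qinv by (rule funpow_mult_image_sub)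
  have W: "\<forall>q\<ge>1. (g^^(p*q)) ` B \<inter> B = {}"
  proof (intro allI impI)
    fix q :: nat assume q: "q \<ge> 1"
    have "p * q = p + p * (q - 1)" using q by (simp add: algebra_simps)
    then have "(g^^(p*q)) ` Q = (g^^p) ` ((g^^(p*(q-1))) ` Q)" by (simp add: funpow_add image_comp)
    also have "\<dots> \<subseteq> (g^^p) ` Q" using Qpow by (rule image_mono)
    finally have "(g^^(p*q)) ` B \<subseteq> dcone (N+1) w'" using BQ imgQ by blast
    then show "(g^^(p*q)) ` B \<inter> B = {}" using Bdis by blast
  qed
  have orbB: "(g^^n) ` B = dcone (N + 1 - ss g N z n) ((g^^n) z)" for n
  proof -
    have cond: "\<forall>i<n. N \<le> N + 1 - ss g N z i"
    proof (intro allI impI)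
      fix i assume "i < n"
      have "ss g N z i \<le> 0" using allneg zQ by blast
      then show "N \<le> N + 1 - ss g N z i" by simp
    qed
    have N1: "N \<le> N + 1" by simp
    from orbit_lemma[OF G zc N1 cond]
    show ?thesis unfolding B_def by (rule conjunct1)
  qed
  have F: "\<forall>n. (g^^n) ` B \<inter> B \<noteq> {} \<longrightarrow> (g^^n) ` B \<subseteq> B \<or> B \<subseteq> (g^^n) ` B"
  proof (intro allI impI)
    fix n assume "(g^^n) ` B \<inter> B \<noteq> {}"
    then have "dcone (N + 1 - ss g N z n) ((g^^n) z) \<inter> dcone (N+1) z \<noteq> {}" using orbB B_def by simp
    then have "dcone (N + 1 - ss g N z n) ((g^^n) z) \<subseteq> dcone (N+1) z \<or> dcone (N+1) z \<subseteq> dcone (N + 1 - ss g N z n) ((g^^n) z)"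
      by (rule cone_nested_or_disjoint)
    then show "(g^^n) ` B \<subseteq> B \<or> B \<subseteq> (g^^n) ` B" using orbB B_def by simp
  qed
  have "fwd_wand g B" by (rule abs_wand[OF _ p W F]) (simp add: B_def, use cone_self in blast)
  then show ?thesis using zc B_def by blast
qed




lemma ceil_circle_range:
  assumes "x \<in> circle" "0 \<le> l"
  shows "1 \<le> \<lceil>x * p2 l\<rceil> \<and> \<lceil>x * p2 l\<rceil> \<le> 2 ^ nat l"
proof -
  have x: "0 < x" "x \<le> 1" using assms by (auto simp: circle_def)
  have pl: "p2 l = real_of_int (2 ^ nat l)" using assms(2) by (simp add: p2_nonneg_int)
  have "0 < x * p2 l" using x by simp
  then have "1 \<le> \<lceil>x * p2 l\<rceil>" by (simp add: zero_less_ceiling int_one_le_iff_zero_less)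
  moreover have "\<lceil>x * p2 l\<rceil> \<le> 2 ^ nat l"
    using x pl by (simp add: ceiling_le_iff)
  ultimately show ?thesis by simp
qed

lemma cone_as_level: "dcone l x = {v. \<lceil>v * p2 l\<rceil> = \<lceil>x * p2 l\<rceil>}" by (simp add: dcone_def)

lemma cones_finite:
  assumes "0 \<le> l"
  shows "{dcone l w | w. w \<in> circle} \<subseteq> (\<lambda>j. {v. \<lceil>v * p2 l\<rceil> = j}) ` {1..2 ^ nat l}"
  using ceil_circle_range[OF _ assms] by (auto simp: dcone_def)

lemma cones_card:
  assumes "0 \<le> l"
  shows "finite {dcone l w | w. w \<in> circle} \<and> card {dcone l w | w. w \<in> circle} \<le> 2 ^ nat l"
proof -
  have f: "finite ((\<lambda>j. {v. \<lceil>v * p2 l\<rceil> = j}) ` {1..(2::int) ^ nat l})" by simp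
  have "card ((\<lambda>j. {v. \<lceil>v * p2 l\<rceil> = j}) ` {1..(2::int) ^ nat l}) \<le> card {1..(2::int) ^ nat l}"
    by (rule card_image_le) simp
  also have "\<dots> = 2 ^ nat l" by simp
  finally show ?thesis using cones_finite[OF assms] f
    by (meson card_mono finite_subset order_trans)
qed

lemma kf_finite:
  assumes G: "grid g N"
  shows "finite (kf g N ` circle)"
proof -
  have N0: "0 \<le> N" using G by (simp add: grid_def)
  have "kf g N ` circle \<subseteq> (\<lambda>j. kf g N (real_of_int j / p2 N)) ` {1..2 ^ nat N}"
  proof
    fix k assume "k \<in> kf g N ` circle"
    then obtain y where y: "y \<in> circle" "k = kf g N y" by blast
    define j where "j = \<lceil>y * p2 N\<rceil>"
    have "real_of_int j / p2 N \<in> dcone N y" unfolding dcone_def j_def by simp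
    then have "kf g N (real_of_int j / p2 N) = kf g N y" by (rule kf_cone)
    moreover have "j \<in> {1..2 ^ nat N}" using ceil_circle_range[OF y(1) N0] j_def by simp
    ultimately show "k \<in> (\<lambda>j. kf g N (real_of_int j / p2 N)) ` {1..2 ^ nat N}" using y by force
  qed
  then show ?thesis by (rule finite_subset) simp
qed

lemma kf_bounded:
  assumes G: "grid g N"
  shows "\<exists>Kb\<ge>0. \<forall>y\<in>circle. \<bar>kf g N y\<bar> \<le> Kb"
proof -
  have f: "finite (abs ` kf g N ` circle)" using kf_finite[OF G] by simp
  show ?thesis
  proof (intro exI conjI ballI)
    show "0 \<le> Max (insert 0 (abs ` kf g N ` circle))" using f by simp
    fix y assume "y \<in> circle"
    then show "\<bar>kf g N y\<bar> \<le> Max (insert 0 (abs ` kf g N ` circle))" using f by simp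
  qed
qed

lemma drop_contraction:
  assumes G: "grid g N" and Kb: "\<forall>y\<in>circle. \<bar>kf g N y\<bar> \<le> Kb"
    and x: "x \<in> circle" and drop: "ss g N x t < - ((Kb + 1) * 2 ^ nat N)"
  shows "\<exists>y\<in>circle. \<exists>p\<ge>1. (\<forall>i. 1 \<le> i \<and> i \<le> p \<longrightarrow> ss g N y i < 0) \<and> dcone N ((g^^p) y) = dcone N y"
proof -
  have N0: "0 \<le> N" using G by (simp add: grid_def)
  define f where "f = ss g N x"
  define E where "E = Kb + 1"
  define u where "u = (\<lambda>\<theta>. Max {v \<in> {0..t}. \<theta> \<le> f v})"
  have Kb0: "0 \<le> Kb" using Kb x by fastforce
  have f0: "f 0 = 0" by (simp add: f_def)
  have props: "u \<theta> < t \<and> \<theta> \<le> f (u \<theta>) \<and> f (u \<theta>) < \<theta> + E \<and> (\<forall>v. u \<theta> < v \<and> v \<le> t \<longrightarrow> f v < \<theta>)"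
    if th: "f t < \<theta>" "\<theta> \<le> 0" for \<theta>
  proof -
    define S where "S = {v \<in> {0..t}. \<theta> \<le> f v}"
    have fin: "finite S" unfolding S_def by simp
    have ne: "0 \<in> S" unfolding S_def using th f0 by simp
    have uS: "u \<theta> \<in> S" unfolding u_def S_def[symmetric] using fin ne Max_in by blast
    have umax: "\<And>v. v \<in> S \<Longrightarrow> v \<le> u \<theta>" unfolding u_def S_def[symmetric] using fin by simp
    have ut1: "u \<theta> \<le> t" "\<theta> \<le> f (u \<theta>)" using uS unfolding S_def by auto
    then have "u \<theta> \<noteq> t" using th(1) by auto
    then have ut: "u \<theta> < t" using ut1 by simp
    have after: "\<forall>v. u \<theta> < v \<and> v \<le> t \<longrightarrow> f v < \<theta>"
    proof (intro allI impI)
      fix v assume v: "u \<theta> < v \<and> v \<le> t"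
      show "f v < \<theta>"
      proof (rule ccontr)
        assume "\<not> f v < \<theta>"
        then have "v \<in> S" unfolding S_def using v by simp
        then show False using umax v by fastforce
      qed
    qed
    have "f (Suc (u \<theta>)) < \<theta>" using after ut by simp
    moreover have "f (Suc (u \<theta>)) = f (u \<theta>) + kf g N ((g^^(u \<theta>)) x)" unfolding f_def by (rule ss_Suc)
    moreover have "\<bar>kf g N ((g^^(u \<theta>)) x)\<bar> \<le> Kb" using Kb grid_funpow_circ[OF G x] by blast
    ultimately have "f (u \<theta>) < \<theta> + E" unfolding E_def by linarith
    then show ?thesis using ut uS after unfolding S_def by simp
  qed
  define th where "th = (\<lambda>j::nat. f t + 1 + int j * E)"
  have thok: "f t < th j \<and> th j \<le> 0" if "j \<le> 2 ^ nat N" for j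
  proof -
    have "int j * E \<le> 2 ^ nat N * E" using that Kb0 E_def by (simp add: mult_right_mono)
    moreover have "f t < - (E * 2 ^ nat N)" using drop f_def E_def by simp
    moreover have "0 \<le> int j * E" using Kb0 E_def by simp
    ultimately show ?thesis unfolding th_def by (simp add: algebra_simps)
  qed
  define \<phi> where "\<phi> = (\<lambda>j. dcone N ((g^^(u (th j))) x))"
  have img: "\<phi> ` {0..2 ^ nat N} \<subseteq> {dcone N w | w. w \<in> circle}"
    unfolding \<phi>_def using grid_funpow_circ[OF G x] by blast
  have "card (\<phi> ` {0..2 ^ nat N}) \<le> 2 ^ nat N"
    using cones_card[OF N0] img by (meson card_mono order_trans)
  then have "card (\<phi> ` {0..2 ^ nat N}) < card {0..(2::nat) ^ nat N}" by simp
  then have "\<not> inj_on \<phi> {0..2 ^ nat N}" by (rule pigeonhole)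
  then obtain j j' where jj: "j \<in> {0..2 ^ nat N}" "j' \<in> {0..2 ^ nat N}" "j \<noteq> j'" "\<phi> j = \<phi> j'"
    unfolding inj_on_def by blast
  obtain a b where ab: "a < b" "a \<le> 2 ^ nat N" "b \<le> 2 ^ nat N" "\<phi> a = \<phi> b"
  proof (cases "j < j'")
    case True then show ?thesis using that jj by auto
  next
    case False then have "j' < j" using jj(3) by simp
    then show ?thesis using that jj by auto
  qed
  define u1 where "u1 = u (th b)"
  define u2 where "u2 = u (th a)"
  have Pa: "u2 < t \<and> th a \<le> f u2 \<and> f u2 < th a + E \<and> (\<forall>v. u2 < v \<and> v \<le> t \<longrightarrow> f v < th a)"
    unfolding u2_def using props thok[OF ab(2)] by blast
  have Pb: "u1 < t \<and> th b \<le> f u1 \<and> f u1 < th b + E \<and> (\<forall>v. u1 < v \<and> v \<le> t \<longrightarrow> f v < th b)"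
    unfolding u1_def using props thok[OF ab(3)] by blast
  have thab: "th a + E \<le> th b"
  proof -
    have "int a + 1 \<le> int b" using ab(1) by simp
    then have "(int a + 1) * E \<le> int b * E" by (rule mult_right_mono) (simp add: E_def Kb0)
    then show ?thesis by (simp add: th_def algebra_simps)
  qed
  have u12: "u1 < u2"
  proof (rule ccontr)
    assume "\<not> u1 < u2"
    then have "u2 \<le> u1" by simp
    moreover have "u2 \<noteq> u1" using Pa Pb thab by auto
    ultimately have "u2 < u1" by simp
    then have "f u1 < th a" using Pa Pb by simp
    then show False using Pb thab E_def Kb0 by linarith
  qed
  define y where "y = (g^^u1) x"
  define p where "p = u2 - u1"
  have y: "y \<in> circle" unfolding y_def using grid_funpow_circ[OF G x] .
  have p: "p \<ge> 1" unfolding p_def using u12 by simp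
  have neg: "\<forall>i. 1 \<le> i \<and> i \<le> p \<longrightarrow> ss g N y i < 0"
  proof (intro allI impI)
    fix i assume i: "1 \<le> i \<and> i \<le> p"
    have "f (u1 + i) = f u1 + ss g N y i" unfolding f_def y_def by (rule ss_add)
    moreover have "f (u1 + i) < th b" using Pb i Pa unfolding p_def by auto
    ultimately show "ss g N y i < 0" using Pb by simp
  qed
  have "u2 = p + u1" using u12 p_def by simp
  then have "(g^^p) y = (g^^u2) x" by (simp add: funpow_add y_def)
  then have "dcone N ((g^^p) y) = dcone N y" using ab(4) unfolding \<phi>_def u1_def u2_def y_def by simp
  then show ?thesis using y p neg by blast
qed




lemma grid_inj_pow: "grid g N \<Longrightarrow> inj_on (g^^n) circle"
  unfolding grid_def using bij_betw_funpow bij_betw_def by blast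

lemma funpow_fix_mult: "(f^^q) x = x \<Longrightarrow> (f^^(q*m)) x = x"
proof (induction m)
  case 0 then show ?case by simp
next
  case (Suc m)
  have e: "q * Suc m = q*m + q" by simp
  have "(f^^(q * Suc m)) x = (f^^(q*m)) ((f^^q) x)" unfolding e funpow_add by simp
  then show ?case using Suc by simp
qed

lemma cone_top:
  fixes x :: real and l :: int
  defines "t \<equiv> real_of_int \<lceil>x * p2 l\<rceil> / p2 l"
  shows "t \<in> dcone l x" "\<And>w. w \<in> dcone l x \<Longrightarrow> w \<le> t"
proof -
  show "t \<in> dcone l x" unfolding t_def dcone_def by simp
  fix w assume "w \<in> dcone l x"
  then have "w * p2 l \<le> real_of_int \<lceil>x * p2 l\<rceil>" unfolding dcone_def by (metis mem_Collect_eq le_of_int_ceiling)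
  then show "w \<le> t" unfolding t_def by (simp add: field_simps)
qed

lemma affine_same_image:
  fixes a c1 c2 t :: real
  assumes "(\<lambda>w. a * w + c1) ` J = (\<lambda>w. a * w + c2) ` J" "0 < a" "t \<in> J" "\<And>w. w \<in> J \<Longrightarrow> w \<le> t"
  shows "c1 = c2"
proof -
  have le: "c1 \<le> c2" if "(\<lambda>w. a * w + c1) ` J = (\<lambda>w. a * w + c2) ` J" for c1 c2
  proof -
    have "a * t + c1 \<in> (\<lambda>w. a * w + c2) ` J" using that assms(3) by blast
    then obtain w where w: "w \<in> J" "a * t + c1 = a * w + c2" by blast
    have "a * w \<le> a * t" using mult_left_mono[OF assms(4)[OF w(1)]] assms(2) by simp
    then show ?thesis using w by simp
  qed
  show ?thesis using le[OF assms(1)] le[OF assms(1)[symmetric]] by simp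
qed

lemma bounded_periodic:
  assumes G: "grid g N" and B: "\<forall>x\<in>circle. \<forall>n. - D1 \<le> ss g N x n \<and> ss g N x n \<le> D2"
  shows "\<exists>P>0. \<forall>x\<in>circle. (g^^P) x = x"
proof -
  have N0: "0 \<le> N" using G by (simp add: grid_def)
  have "(1::real) \<in> circle" by (simp add: circle_def)
  then have "- D1 \<le> ss g N 1 0 \<and> ss g N 1 0 \<le> D2" using B by blast
  then have D2: "0 \<le> D2" and D1: "0 \<le> D1" by simp_all
  define L where "L = N + D2"
  define Lm where "Lm = N + D1 + D2"
  define T where "T = (\<lambda>(l,j). (l, {v. \<lceil>v * p2 l\<rceil> = j})) ` ({N..Lm} \<times> {1..2 ^ nat Lm})"
  have Tfin: "finite T" unfolding T_def by simp
  define P0 where "P0 = card T"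
  have per: "\<exists>q. 1 \<le> q \<and> q \<le> P0 \<and> (g^^q) x = x" if x: "x \<in> circle" for x
  proof -
    have L: "N \<le> L" using D2 L_def by simp
    have cond: "\<forall>i<n. N \<le> L - ss g N x i" for n using B x L_def by auto
    note OL = orbit_lemma[OF G x L cond]
    define \<phi> where "\<phi> = (\<lambda>n. (L - ss g N x n, dcone (L - ss g N x n) ((g^^n) x)))"
    have inT: "\<phi> n \<in> T" for n
    proof -
      define l where "l = L - ss g N x n"
      have "- D1 \<le> ss g N x n \<and> ss g N x n \<le> D2" using B x by blast
      then have l: "N \<le> l" "l \<le> Lm" unfolding l_def L_def Lm_def by auto
      have gx: "(g^^n) x \<in> circle" using grid_funpow_circ[OF G x] .
      have r: "1 \<le> \<lceil>(g^^n) x * p2 l\<rceil> \<and> \<lceil>(g^^n) x * p2 l\<rceil> \<le> 2 ^ nat l" using ceil_circle_range[OF gx] l N0 by simp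
      have "(2::int) ^ nat l \<le> 2 ^ nat Lm" using l N0 by (intro power_increasing) auto
      then have "\<lceil>(g^^n) x * p2 l\<rceil> \<in> {1..2 ^ nat Lm}" using r by (auto intro: order_trans)
      moreover have "l \<in> {N..Lm}" using l by simp
      ultimately show ?thesis unfolding \<phi>_def T_def l_def[symmetric] dcone_def by force
    qed
    have "\<phi> ` {0..P0} \<subseteq> T" using inT by blast
    then have "card (\<phi> ` {0..P0}) \<le> P0" unfolding P0_def using Tfin by (simp add: card_mono)
    then have "card (\<phi> ` {0..P0}) < card {0..P0}" by simp
    then have "\<not> inj_on \<phi> {0..P0}" by (rule pigeonhole)
    then obtain a b where ab0: "a \<in> {0..P0}" "b \<in> {0..P0}" "a \<noteq> b" "\<phi> a = \<phi> b"
      unfolding inj_on_def by blast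
    obtain c d where cd: "c < d" "d \<le> P0" "\<phi> c = \<phi> d"
    proof (cases "a < b")
      case True then show ?thesis using that ab0 by auto
    next
      case False then have "b < a" using ab0(3) by simp
      then show ?thesis using that ab0 by auto
    qed
    have sseq: "ss g N x c = ss g N x d" and coneeq: "dcone (L - ss g N x c) ((g^^c) x) = dcone (L - ss g N x d) ((g^^d) x)"
      using cd(3) unfolding \<phi>_def by auto
    obtain cc where cc: "\<forall>w\<in>dcone L x. (g^^c) w = p2 (ss g N x c) * w + cc" using OL by blast
    obtain cd' where cd': "\<forall>w\<in>dcone L x. (g^^d) w = p2 (ss g N x d) * w + cd'" using OL by blast
    have ic: "(g^^c) ` dcone L x = dcone (L - ss g N x c) ((g^^c) x)" using OL by blast
    have id: "(g^^d) ` dcone L x = dcone (L - ss g N x d) ((g^^d) x)" using OL by blast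
    have "(\<lambda>w. p2 (ss g N x c) * w + cc) ` dcone L x = (\<lambda>w. p2 (ss g N x c) * w + cd') ` dcone L x"
    proof -
      have "(\<lambda>w. p2 (ss g N x c) * w + cc) ` dcone L x = (g^^c) ` dcone L x"
        using cc by (intro image_cong) auto
      also have "\<dots> = (g^^d) ` dcone L x" using ic id coneeq by simp
      also have "\<dots> = (\<lambda>w. p2 (ss g N x c) * w + cd') ` dcone L x"
        using cd' sseq by (intro image_cong) auto
      finally show ?thesis .
    qed
    then have "cc = cd'" using affine_same_image cone_top by (metis p2_pos)
    then have eq: "(g^^c) x = (g^^d) x" using cc cd' sseq cone_self by metis
    have "d = c + (d - c)" using cd by simp
    then have "(g^^d) x = (g^^c) ((g^^(d-c)) x)" by (metis funpow_add o_apply)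
    then have "(g^^c) ((g^^(d-c)) x) = (g^^c) x" using eq by simp
    moreover have "(g^^(d-c)) x \<in> circle" using grid_funpow_circ[OF G x] .
    ultimately have "(g^^(d-c)) x = x" using grid_inj_pow[OF G] x unfolding inj_on_def by blast
    then show ?thesis using cd by (intro exI[of _ "d - c"]) auto
  qed
  show ?thesis
  proof (intro exI[of _ "fact P0 :: nat"] conjI ballI)
    show "0 < (fact P0 :: nat)" by simp
    fix x assume x: "x \<in> circle"
    then obtain q where q: "1 \<le> q" "q \<le> P0" "(g^^q) x = x" using per by blast
    have "q dvd (fact P0 :: nat)" using q by (simp add: dvd_fact)
    then obtain m where "(fact P0 :: nat) = q * m" by blast
    then show "(g^^(fact P0 :: nat)) x = x" using funpow_fix_mult[OF q(3)] by simp
  qed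
qed




lemma grid_bij: "grid g N \<Longrightarrow> bij_betw g circle circle" by (simp add: grid_def)

lemma vinv_props:
  assumes G: "grid g N"
  shows "\<And>z. z \<in> circle \<Longrightarrow> vinv g z \<in> circle"
    and "\<And>z. z \<in> circle \<Longrightarrow> g (vinv g z) = z"
    and "\<And>v. v \<in> circle \<Longrightarrow> vinv g (g v) = v"
    and "bij_betw (vinv g) circle circle"
proof -
  have b: "bij_betw g circle circle" using G by (simp add: grid_def)
  show 1: "\<And>z. z \<in> circle \<Longrightarrow> vinv g z \<in> circle"
    unfolding vinv_def using b by (simp add: bij_betw_def inv_into_into)
  show "\<And>z. z \<in> circle \<Longrightarrow> g (vinv g z) = z"
    unfolding vinv_def using b by (simp add: bij_betw_def f_inv_into_f)
  show "\<And>v. v \<in> circle \<Longrightarrow> vinv g (g v) = v"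
    unfolding vinv_def using b by (simp add: bij_betw_def bij_betwE)
  have "bij_betw (inv_into circle g) circle circle" using b by (rule bij_betw_inv_into)
  then show "bij_betw (vinv g) circle circle"
    by (rule bij_betw_cong[THEN iffD1, rotated]) (simp add: vinv_def)
qed

lemma p2_inj: "p2 a = p2 b \<Longrightarrow> a = b"
  using powr_inj[of 2 "real_of_int a" "real_of_int b"] by simp

lemma two_points_slope:
  fixes a b c d :: real
  assumes "\<forall>w\<in>dcone l z. a * w + c = b * w + d"
  shows "a = b"
proof -
  define j where "j = \<lceil>z * p2 l\<rceil>"
  define t1 where "t1 = real_of_int j / p2 l"
  define t2 where "t2 = (real_of_int j - 1/2) / p2 l"
  have "t1 \<in> dcone l z" unfolding dcone_def t1_def j_def by simp
  moreover have "t2 \<in> dcone l z" unfolding dcone_def t2_def j_def by (simp add: ceiling_eq_iff)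
  ultimately have e: "a * t1 + c = b * t1 + d" "a * t2 + c = b * t2 + d" using assms by auto
  have "t1 \<noteq> t2" unfolding t1_def t2_def by (simp add: divide_right_mono)
  then have "(a - b) * (t1 - t2) = 0" using e by (simp add: algebra_simps)
  then show ?thesis using \<open>t1 \<noteq> t2\<close> by simp
qed

lemma inv_grid:
  assumes G: "grid g N" and Kb: "\<forall>y\<in>circle. \<bar>kf g N y\<bar> \<le> Kb" and Kb0: "0 \<le> Kb"
  shows "grid (vinv g) (N + Kb) \<and> (\<forall>v\<in>circle. kf (vinv g) (N + Kb) (g v) = - kf g N v)"
proof -
  define h where "h = vinv g"
  define N' where "N' = N + Kb"
  have N0: "0 \<le> N" using G by (simp add: grid_def)
  note vp = vinv_props[OF G, folded h_def]
  have affh: "aff h N' z (- kf g N (h z)) (- c / p2 (kf g N (h z)))"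
    if z: "z \<in> circle" and A: "aff g N (h z) (kf g N (h z)) c" for z c
  proof -
    define v where "v = h z"
    define k where "k = kf g N v"
    have v: "v \<in> circle" using vp(1)[OF z] v_def by simp
    have gv: "g v = z" using vp(2)[OF z] v_def by simp
    have aff: "\<And>w. w \<in> dcone N v \<Longrightarrow> g w = p2 k * w + c" and ci: "c * p2 (N - k) \<in> \<int>"
      using A unfolding aff_def v_def[symmetric] k_def[symmetric] by auto
    have kb: "\<bar>k\<bar> \<le> Kb" using Kb v k_def by simp
    have sub: "dcone N' z \<subseteq> dcone (N - k) z" using kb unfolding N'_def by (intro cone_mono) simp
    have im: "g ` dcone N v = dcone (N - k) z" using step_lemma[OF G v order_refl] gv k_def by simp
    have part1: "\<forall>w\<in>dcone N' z. h w = p2 (- k) * w + (- c / p2 k)"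
    proof
      fix w assume "w \<in> dcone N' z"
      then have "w \<in> g ` dcone N v" using sub im by blast
      then obtain u where u: "u \<in> dcone N v" "w = g u" by blast
      have uc: "u \<in> circle" using cone_circle[OF v N0] u(1) by blast
      have "h w = u" using vp(3)[OF uc] u(2) by simp
      moreover have "w = p2 k * u + c" using aff[OF u(1)] u(2) by simp
      ultimately show "h w = p2 (- k) * w + (- c / p2 k)"
        by (simp add: powr_minus field_simps)
    qed
    have "p2 (Kb + k) \<in> \<int>" using kb by (intro p2_nonneg_Ints) simp
    then have "c * p2 (N - k) * p2 (Kb + k) \<in> \<int>" using ci by (rule Ints_mult[rotated])
    moreover have "p2 (N - k) * p2 (Kb + k) = p2 N'" unfolding N'_def using p2_add[of "N - k" "Kb + k"] by simp
    ultimately have "c * p2 N' \<in> \<int>" by (simp add: mult.assoc)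
    then have "- (c * p2 N') \<in> \<int>" by simp
    moreover have "(- c / p2 k) * p2 (N' - - k) = - (c * p2 N')"
      using p2_add[of N' k] by simp
    ultimately have part2: "(- c / p2 k) * p2 (N' - - k) \<in> \<int>" by simp
    show ?thesis unfolding aff_def v_def[symmetric] k_def[symmetric] using part1 part2 by (rule conjI)
  qed
  have gridh: "grid h N'"
    unfolding grid_def
  proof (intro conjI ballI)
    show "0 \<le> N'" using N0 Kb0 N'_def by simp
    show "bij_betw h circle circle" using vp(4) .
    fix z assume z: "z \<in> circle"
    obtain c where "aff g N (h z) (kf g N (h z)) c" using kf_aff[OF G vp(1)[OF z]] by blast
    then show "\<exists>k c. aff h N' z k c" using affh[OF z] by blast
  qed
  have kfrel: "kf h N' (g v) = - kf g N v" if v: "v \<in> circle" for v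
  proof -
    define z where "z = g v"
    have z: "z \<in> circle" using grid_circ[OF G v] z_def by simp
    have hz: "h z = v" using vp(3)[OF v] z_def by simp
    obtain c where c: "aff g N (h z) (kf g N (h z)) c" using kf_aff[OF G vp(1)[OF z]] by blast
    obtain c2 where c2: "aff h N' z (kf h N' z) c2" using kf_aff[OF gridh z] by blast
    have e1: "\<forall>w\<in>dcone N' z. h w = p2 (kf h N' z) * w + c2" using c2 unfolding aff_def by (rule conjunct1)
    have e2: "\<forall>w\<in>dcone N' z. h w = p2 (- kf g N (h z)) * w + (- c / p2 (kf g N (h z)))"
      using affh[OF z c] unfolding aff_def by (rule conjunct1)
    have "\<forall>w\<in>dcone N' z. p2 (kf h N' z) * w + c2 = p2 (- kf g N (h z)) * w + (- c / p2 (kf g N (h z)))"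
    proof
      fix w assume w: "w \<in> dcone N' z"
      show "p2 (kf h N' z) * w + c2 = p2 (- kf g N (h z)) * w + (- c / p2 (kf g N (h z)))"
        using e1[rule_format, OF w] e2[rule_format, OF w] by (rule trans[OF sym])
    qed
    then have "p2 (kf h N' z) = p2 (- kf g N (h z))" by (rule two_points_slope)
    then have "kf h N' z = - kf g N (h z)" using p2_inj by blast
    then show ?thesis using hz z_def by simp
  qed
  show ?thesis using gridh kfrel unfolding h_def N'_def by blast
qed

lemma inv_funpow:
  assumes G: "grid g N" and u: "u \<in> circle"
  shows "(vinv g ^^ n) ((g^^n) u) = u"
  using u
proof (induction n arbitrary: u)
  case 0 then show ?case by simp
next
  case (Suc n)
  have "(vinv g ^^ Suc n) ((g^^Suc n) u) = (vinv g ^^ n) (vinv g ((g^^Suc n) u))"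
    by (simp only: funpow_Suc_right o_apply)
  also have "(g^^Suc n) u = g ((g^^n) u)" by simp
  also have "vinv g (g ((g^^n) u)) = (g^^n) u" using vinv_props(3)[OF G grid_funpow_circ[OF G Suc.prems]] .
  finally show ?case using Suc by simp
qed

lemma funpow_inv:
  assumes G: "grid g N" and u: "u \<in> circle"
  shows "(g ^^ n) ((vinv g^^n) u) = u"
  using u
proof (induction n arbitrary: u)
  case 0 then show ?case by simp
next
  case (Suc n)
  have c: "(vinv g ^^ n) u \<in> circle" using Suc.prems
    by (induction n) (auto simp: vinv_props(1)[OF G])
  have "(g ^^ Suc n) ((vinv g^^Suc n) u) = (g ^^ n) (g ((vinv g^^Suc n) u))"
    by (simp only: funpow_Suc_right o_apply)
  also have "(vinv g^^Suc n) u = vinv g ((vinv g^^n) u)" by simp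
  also have "g (vinv g ((vinv g^^n) u)) = (vinv g^^n) u" using vinv_props(2)[OF G c] .
  finally show ?case using Suc by simp
qed

lemma ss_inv_rel:
  assumes G: "grid g N" and Kb: "\<forall>y\<in>circle. \<bar>kf g N y\<bar> \<le> Kb" and Kb0: "0 \<le> Kb"
  and w: "w \<in> circle"
  shows "ss (vinv g) (N + Kb) ((g^^m) w) m = - ss g N w m"
  using w
proof (induction m arbitrary: w)
  case 0 then show ?case by simp
next
  case (Suc m)
  note IR = inv_grid[OF G Kb Kb0]
  have gw: "(g^^m) w \<in> circle" using grid_funpow_circ[OF G Suc.prems] .
  have "ss (vinv g) (N + Kb) ((g^^Suc m) w) (1 + m) = ss (vinv g) (N + Kb) ((g^^Suc m) w) 1 + ss (vinv g) (N + Kb) (vinv g ((g^^Suc m) w)) m"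
    using ss_add[of "vinv g" "N + Kb" "(g^^Suc m) w" 1 m] by simp
  also have "vinv g ((g^^Suc m) w) = (g^^m) w" using vinv_props(3)[OF G gw] by simp
  also have "ss (vinv g) (N + Kb) ((g^^Suc m) w) 1 = - kf g N ((g^^m) w)"
    using IR gw by (simp add: ss_def)
  finally show ?case using Suc.IH[OF Suc.prems] by (simp add: ss_Suc)
qed




lemma dyadic_ints: assumes "dyadic e" shows "\<exists>n0. \<forall>m\<ge>n0. e * p2 m \<in> \<int>"
proof -
  obtain a :: int and n :: nat where e: "e = of_int a / 2 ^ n" using assms by (auto simp: dyadic_def)
  show ?thesis
  proof (intro exI allI impI)
    fix m :: int assume m: "int n \<le> m"
    have "p2 m = p2 (m - int n) * p2 (int n)" using p2_add[of "m - int n" "int n"] by simp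
    moreover have "p2 (int n) = 2 ^ n" using p2_nonneg_int[of "int n"] by simp
    ultimately have "e * p2 m = of_int a * p2 (m - int n)" unfolding e by simp
    moreover have "p2 (m - int n) \<in> \<int>" using m by (intro p2_nonneg_Ints) simp
    ultimately show "e * p2 m \<in> \<int>" by simp
  qed
qed

lemma eventually_all:
  assumes "finite P" "\<forall>p\<in>P. \<exists>M::int. \<forall>N\<ge>M. R p N"
  shows "\<exists>M. \<forall>N\<ge>M. \<forall>p\<in>P. R p N"
  using assms
proof (induction P rule: finite_induct)
  case empty then show ?case by simp
next
  case (insert x F)
  then obtain M1 where M1: "\<forall>N\<ge>M1. \<forall>p\<in>F. R p N" by blast
  obtain M2 where M2: "\<forall>N\<ge>M2. R x N" using insert.prems by blast
  show ?case
  proof (intro exI[of _ "max M1 M2"] allI impI ballI)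
    fix N p assume "max M1 M2 \<le> N" "p \<in> insert x F"
    then show "R p N" using M1 M2 by auto
  qed
qed

lemma thompson_grid:
  assumes fV: "f \<in> thompsonV" shows "\<exists>N. grid f N"
proof -
  have bij: "bij_betw f circle circle" and dy: "\<forall>x\<in>circle. dyadic x \<longrightarrow> dyadic (f x)"
    using fV by (auto simp: thompsonV_def)
  obtain D where Df: "finite D" and Dc: "D \<subseteq> circle" and D1: "1 \<in> D" and Dd: "\<forall>d\<in>D. dyadic d"
    and pw: "\<forall>a b. a \<in> insert 0 D \<and> b \<in> D \<and> a < b \<and> {a<..<b} \<inter> D = {} \<longrightarrow>
                 (\<exists>(k::int) c. \<forall>x\<in>{a<..b}. f x = 2 powr (real_of_int k) * x + c)"
    using fV unfolding thompsonV_def by blast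
  define D0 where "D0 = insert 0 D"
  define P where "P = {(a,b). a \<in> D0 \<and> b \<in> D \<and> a < b \<and> {a<..<b} \<inter> D = {}}"
  have Pfin: "finite P" unfolding P_def D0_def
    by (rule finite_subset[of _ "insert 0 D \<times> D"]) (use Df in auto)
  define R where "R = (\<lambda>(ab::real\<times>real) N. \<exists>k c. (\<forall>x\<in>{fst ab<..snd ab}. f x = p2 k * x + c) \<and> c * p2 (N - k) \<in> \<int>)"
  have "\<forall>p\<in>P. \<exists>M. \<forall>N\<ge>M. R p N"
  proof
    fix ab assume ab: "ab \<in> P"
    obtain a b where abe: "ab = (a,b)" by (cases ab)
    have ab': "a \<in> insert 0 D \<and> b \<in> D \<and> a < b \<and> {a<..<b} \<inter> D = {}" using ab abe unfolding P_def D0_def by simp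
    then obtain k c where kc: "\<forall>x\<in>{a<..b}. f x = p2 k * x + c" using pw by blast
    have bD: "b \<in> D" and ab1: "a < b" using ab' by auto
    have bc: "b \<in> circle" using bD Dc by blast
    have "f b = p2 k * b + c" using kc ab1 by simp
    then have ce: "c = f b - p2 k * b" by simp
    obtain n1 where n1: "\<forall>m\<ge>n1. f b * p2 m \<in> \<int>" using dyadic_ints dy bc Dd bD by blast
    obtain n2 where n2: "\<forall>m\<ge>n2. b * p2 m \<in> \<int>" using dyadic_ints Dd bD by blast
    show "\<exists>M. \<forall>N\<ge>M. R ab N"
    proof (intro exI[of _ "max (n1 + k) n2"] allI impI)
      fix N assume N: "max (n1 + k) n2 \<le> N"
      have "p2 k * p2 (N - k) = p2 N" using p2_add[of k "N - k"] by simp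
      then have "c * p2 (N - k) = f b * p2 (N - k) - b * p2 N" unfolding ce by (simp add: algebra_simps)
      moreover have "f b * p2 (N - k) \<in> \<int>" using n1 N by (metis max.bounded_iff le_diff_eq)
      moreover have "b * p2 N \<in> \<int>" using n2 N by simp
      ultimately have "c * p2 (N - k) \<in> \<int>" by simp
      then show "R ab N" unfolding R_def abe using kc by auto
    qed
  qed
  then obtain M1 where M1: "\<forall>N\<ge>M1. \<forall>p\<in>P. R p N" using eventually_all[OF Pfin] by blast
  have "\<forall>d\<in>D0. \<exists>M. \<forall>N\<ge>M. d * p2 N \<in> \<int>"
  proof
    fix d assume "d \<in> D0"
    then have "dyadic d" unfolding D0_def using Dd by (auto simp: dyadic_def)
    then show "\<exists>M. \<forall>N\<ge>M. d * p2 N \<in> \<int>" by (rule dyadic_ints)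
  qed
  then obtain M2 where M2: "\<forall>N\<ge>M2. \<forall>d\<in>D0. d * p2 N \<in> \<int>"
    using eventually_all[of D0 "\<lambda>d N. d * p2 N \<in> \<int>"] Df D0_def by auto
  define N where "N = max 0 (max M1 M2)"
  have RN: "\<forall>p\<in>P. R p N" using M1 N_def by simp
  have DN: "\<forall>d\<in>D0. d * p2 N \<in> \<int>" using M2 N_def by simp
  have "grid f N"
    unfolding grid_def
  proof (intro conjI ballI)
    show "0 \<le> N" by (simp add: N_def)
    show "bij_betw f circle circle" by (rule bij)
    fix y assume y: "y \<in> circle"
    define A where "A = {d \<in> D0. d < y}"
    define B where "B = {d \<in> D. y \<le> d}"
    have y01: "0 < y" "y \<le> 1" using y by (auto simp: circle_def)
    have Af: "finite A" "A \<noteq> {}" unfolding A_def D0_def using Df y01 by auto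
    have Bf: "finite B" "B \<noteq> {}" unfolding B_def using Df D1 y01 by auto
    define a where "a = Max A"
    define b where "b = Min B"
    have aA: "a \<in> A" unfolding a_def using Af by simp
    have bB: "b \<in> B" unfolding b_def using Bf by simp
    have amax: "\<And>d. d \<in> A \<Longrightarrow> d \<le> a" unfolding a_def using Af by simp
    have bmin: "\<And>d. d \<in> B \<Longrightarrow> b \<le> d" unfolding b_def using Bf by simp
    have ay: "a < y" and aD0: "a \<in> D0" using aA A_def by auto
    have yb: "y \<le> b" and bD: "b \<in> D" using bB B_def by auto
    have gap: "{a<..<b} \<inter> D = {}"
    proof (rule ccontr)
      assume "{a<..<b} \<inter> D \<noteq> {}"
      then obtain d where d: "d \<in> D" "a < d" "d < b" by auto
      show False
      proof (cases "d < y")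
        case True then have "d \<in> A" unfolding A_def D0_def using d by simp
        then show False using amax d by force
      next
        case False then have "d \<in> B" unfolding B_def using d by simp
        then show False using bmin d by force
      qed
    qed
    have "(a, b) \<in> P" unfolding P_def using aD0 bD ay yb gap by auto
    then have "R (a,b) N" using RN by blast
    then obtain k c where kc: "\<forall>x\<in>{a<..b}. f x = p2 k * x + c" and ci: "c * p2 (N - k) \<in> \<int>"
      unfolding R_def by auto
    obtain Ai where Ai: "a * p2 N = of_int Ai" using DN aD0 Ints_cases by metis
    obtain Bi where Bi: "b * p2 N = of_int Bi" using DN bD D0_def Ints_cases by (metis insert_iff)
    have "dcone N y \<subseteq> {a<..b}"
    proof
      fix w assume "w \<in> dcone N y"
      then have J: "\<lceil>w * p2 N\<rceil> = \<lceil>y * p2 N\<rceil>" by (simp add: dcone_def)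
      have "a * p2 N < y * p2 N" using ay by simp
      then have "real_of_int Ai < real_of_int \<lceil>y * p2 N\<rceil>" using Ai le_of_int_ceiling[of "y * p2 N"] by linarith
      then have "Ai \<le> \<lceil>w * p2 N\<rceil> - 1" using J by simp
      moreover have "real_of_int (\<lceil>w * p2 N\<rceil> - 1) < w * p2 N" using ceiling_correct[of "w * p2 N"] by simp
      ultimately have "a * p2 N < w * p2 N" using Ai by (smt (verit) of_int_le_iff)
      then have aw: "a < w" by simp
      have "y * p2 N \<le> b * p2 N" using yb by simp
      then have "\<lceil>y * p2 N\<rceil> \<le> Bi" using Bi by (simp add: ceiling_le_iff)
      then have "w * p2 N \<le> real_of_int Bi" using J le_of_int_ceiling[of "w * p2 N"] by (smt (verit) of_int_le_iff)
      then have "w * p2 N \<le> b * p2 N" using Bi by simp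
      then have "w \<le> b" by simp
      then show "w \<in> {a<..b}" using aw by simp
    qed
    then have "\<forall>w\<in>dcone N y. f w = p2 k * w + c" using kc by blast
    then show "\<exists>k c. aff f N y k c" unfolding aff_def using ci by blast
  qed
  then show ?thesis by blast
qed




lemma wand_from_inv:
  assumes G: "grid g N" and Bc: "B \<subseteq> circle" and W: "fwd_wand (vinv g) B"
  shows "fwd_wand g B"
  unfolding fwd_wand_def
proof (intro allI impI)
  fix n :: nat assume n: "n \<ge> 1"
  show "(g^^n) ` B \<inter> B = {}"
  proof (rule ccontr)
    assume "(g^^n) ` B \<inter> B \<noteq> {}"
    then obtain u where u: "u \<in> B" "(g^^n) u \<in> B" by blast
    have "(vinv g ^^ n) ((g^^n) u) = u" using inv_funpow[OF G] u(1) Bc by blast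
    then have "(vinv g ^^ n) ` B \<inter> B \<noteq> {}" using u by (metis IntI emptyE imageI)
    then show False using W n unfolding fwd_wand_def by blast
  qed
qed

lemma main_W:
  assumes G: "grid g N" and nf: "\<not> (\<exists>P>0. \<forall>x\<in>circle. (g^^P) x = x)"
  shows "\<exists>z\<in>circle. \<exists>l\<ge>0. fwd_wand g (dcone l z)"
proof -
  have N0: "0 \<le> N" using G by (simp add: grid_def)
  obtain Kb where Kb0: "0 \<le> Kb" and Kb: "\<forall>y\<in>circle. \<bar>kf g N y\<bar> \<le> Kb" using kf_bounded[OF G] by blast
  show ?thesis
  proof (cases "\<exists>x\<in>circle. \<exists>t. ss g N x t < - ((Kb + 1) * 2 ^ nat N)")
    case True
    then obtain x t where x: "x \<in> circle" and t: "ss g N x t < - ((Kb + 1) * 2 ^ nat N)" by blast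
    obtain y p where y: "y \<in> circle" and p: "p \<ge> 1" and neg: "\<forall>i. 1 \<le> i \<and> i \<le> p \<longrightarrow> ss g N y i < 0"
      and ret: "dcone N ((g^^p) y) = dcone N y"
      using drop_contraction[OF G Kb x t] by blast
    obtain z where "z \<in> circle" "fwd_wand g (dcone (N+1) z)" using contraction_wand[OF G y p neg ret] by blast
    then show ?thesis using N0 by (intro bexI[of _ z] exI[of _ "N+1"]) auto
  next
    case False
    then have lo: "\<forall>x\<in>circle. \<forall>n. - ((Kb + 1) * 2 ^ nat N) \<le> ss g N x n" by (simp add: not_less)
    note IR = inv_grid[OF G Kb Kb0]
    define N' where "N' = N + Kb"
    have Gh: "grid (vinv g) N'" using IR unfolding N'_def by (rule conjunct1)
    have N'0: "0 \<le> N'" using Gh by (simp add: grid_def)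
    obtain Kb' where Kb0': "0 \<le> Kb'" and Kb': "\<forall>y\<in>circle. \<bar>kf (vinv g) N' y\<bar> \<le> Kb'" using kf_bounded[OF Gh] by blast
    show ?thesis
    proof (cases "\<exists>x\<in>circle. \<exists>t. ss (vinv g) N' x t < - ((Kb' + 1) * 2 ^ nat N')")
      case True
      then obtain x t where x: "x \<in> circle" and t: "ss (vinv g) N' x t < - ((Kb' + 1) * 2 ^ nat N')" by blast
      obtain y p where y: "y \<in> circle" and p: "p \<ge> 1" and neg: "\<forall>i. 1 \<le> i \<and> i \<le> p \<longrightarrow> ss (vinv g) N' y i < 0"
        and ret: "dcone N' ((vinv g^^p) y) = dcone N' y"
        using drop_contraction[OF Gh Kb' x t] by blast
      obtain z where z: "z \<in> circle" and W: "fwd_wand (vinv g) (dcone (N'+1) z)"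
        using contraction_wand[OF Gh y p neg ret] by blast
      have "dcone (N'+1) z \<subseteq> circle" using cone_circle[OF z] N'0 by simp
      then have "fwd_wand g (dcone (N'+1) z)" using wand_from_inv[OF G _ W] by blast
      then show ?thesis using z N'0 by (intro bexI[of _ z] exI[of _ "N'+1"]) auto
    next
      case False
      then have lo': "\<forall>x\<in>circle. \<forall>n. - ((Kb' + 1) * 2 ^ nat N') \<le> ss (vinv g) N' x n" by (simp add: not_less)
      have "\<forall>x\<in>circle. \<forall>n. - ((Kb + 1) * 2 ^ nat N) \<le> ss g N x n \<and> ss g N x n \<le> (Kb' + 1) * 2 ^ nat N'"
      proof (intro ballI allI conjI)
        fix x n assume x: "x \<in> circle"
        show "- ((Kb + 1) * 2 ^ nat N) \<le> ss g N x n" using lo x by blast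
        have "ss (vinv g) N' ((g^^n) x) n = - ss g N x n" unfolding N'_def by (rule ss_inv_rel[OF G Kb Kb0 x])
        moreover have "- ((Kb' + 1) * 2 ^ nat N') \<le> ss (vinv g) N' ((g^^n) x) n"
          using lo' grid_funpow_circ[OF G x] by blast
        ultimately show "ss g N x n \<le> (Kb' + 1) * 2 ^ nat N'" by simp
      qed
      then have "\<exists>P>0. \<forall>x\<in>circle. (g^^P) x = x" by (rule bounded_periodic[OF G])
      then show ?thesis using nf by blast
    qed
  qed
qed

lemma open_pre:
  assumes "0 \<le> a" "b \<le> 1"
  shows "open (circ_proj -` {a<..<b})"
proof -
  have "circ_proj -` {a<..<b} = (\<Union>m::int. {of_int m + a <..< of_int m + b})"
  proof (intro set_eqI iffI)
    fix x assume "x \<in> circ_proj -` {a<..<b}"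
    then have "a < x - of_int \<lceil>x\<rceil> + 1" "x - of_int \<lceil>x\<rceil> + 1 < b" by (auto simp: circ_proj_def)
    then have "x \<in> {of_int (\<lceil>x\<rceil> - 1) + a <..< of_int (\<lceil>x\<rceil> - 1) + b}" by simp
    then show "x \<in> (\<Union>m::int. {of_int m + a <..< of_int m + b})" by blast
  next
    fix x assume "x \<in> (\<Union>m::int. {of_int m + a <..< of_int m + b})"
    then obtain m :: int where m: "of_int m + a < x" "x < of_int m + b" by auto
    have "\<lceil>x\<rceil> = m + 1" using m assms by (simp add: ceiling_eq_iff)
    then show "x \<in> circ_proj -` {a<..<b}" using m by (simp add: circ_proj_def)
  qed
  moreover have "open (\<Union>m::int. {of_int m + a <..< of_int m + b})" by (intro open_UN) auto
  ultimately show ?thesis by simp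
qed


theorem lemma4p2:
  fixes \<gamma> :: "real \<Rightarrow> real"
  assumes "\<gamma> \<in> thompsonV" and "infinite_order \<gamma>"
  shows "\<exists>U. U \<noteq> {} \<and> circle_open U \<and> wandering \<gamma> U"
proof -
  obtain N where G: "grid \<gamma> N" using thompson_grid[OF assms(1)] by blast
  have outside: "\<And>x. x \<notin> circle \<Longrightarrow> \<gamma> x = x" using assms(1) by (simp add: thompsonV_def)
  have nf: "\<not> (\<exists>P>0. \<forall>x\<in>circle. (\<gamma>^^P) x = x)"
  proof
    assume "\<exists>P>0. \<forall>x\<in>circle. (\<gamma>^^P) x = x"
    then obtain P where P: "P > 0" "\<forall>x\<in>circle. (\<gamma>^^P) x = x" by blast
    have "(\<gamma>^^P) x = x" for x
    proof (cases "x \<in> circle")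
      case True then show ?thesis using P by blast
    next
      case False
      have "(\<gamma>^^n) x = x" for n by (induction n) (simp_all add: outside[OF False])
      then show ?thesis .
    qed
    then have "\<gamma>^^P = id" by (simp add: fun_eq_iff)
    then show False using assms(2) P(1) unfolding infinite_order_def by blast
  qed
  obtain z l where z: "z \<in> circle" and l: "0 \<le> l" and W: "fwd_wand \<gamma> (dcone l z)"
    using main_W[OF G nf] by blast
  define j where "j = \<lceil>z * p2 l\<rceil>"
  define a where "a = (real_of_int j - 1) / p2 l"
  define b where "b = real_of_int j / p2 l"
  define U where "U = {a<..<b}"
  have jr: "1 \<le> j \<and> j \<le> 2 ^ nat l" using ceil_circle_range[OF z l] j_def by simp
  have pl: "p2 l = 2 ^ nat l" using l by (rule p2_nonneg_int)
  have a0: "0 \<le> a" using jr unfolding a_def by simp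
  have b1: "b \<le> 1"
  proof -
    have "real_of_int j \<le> 2 ^ nat l" using jr by (metis of_int_le_iff of_int_numeral of_int_power)
    then show ?thesis unfolding b_def pl by simp
  qed
  have ab: "a < b" unfolding a_def b_def by (simp add: divide_strict_right_mono)
  have Une: "U \<noteq> {}" unfolding U_def using ab by simp
  have UB: "U \<subseteq> dcone l z"
  proof
    fix w assume "w \<in> U"
    then have "a < w" "w < b" unfolding U_def by auto
    then have "real_of_int j - 1 < w * p2 l" "w * p2 l < real_of_int j"
      unfolding a_def b_def by (simp_all add: field_simps)
    then have "\<lceil>w * p2 l\<rceil> = j" by (simp add: ceiling_eq_iff)
    then show "w \<in> dcone l z" unfolding dcone_def j_def by simp
  qed
  have Bc: "dcone l z \<subseteq> circle" using cone_circle[OF z l] .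
  have Uc: "U \<subseteq> circle" using UB Bc by blast
  have op: "circle_open U" unfolding circle_open_def U_def using Uc open_pre[OF a0 b1] U_def by simp
  have wd: "wandering \<gamma> U"
    unfolding wandering_def
  proof (intro allI impI)
    fix n :: int assume ne: "vpow \<gamma> n \<noteq> id"
    show "vpow \<gamma> n ` U \<inter> U = {}"
    proof (cases "0 < n")
      case True
      then have v: "vpow \<gamma> n = \<gamma> ^^ nat n" by (simp add: vpow_def)
      have "nat n \<ge> 1" using True by simp
      then have d: "(\<gamma> ^^ nat n) ` dcone l z \<inter> dcone l z = {}" using W unfolding fwd_wand_def by blast
      have "(\<gamma> ^^ nat n) ` U \<subseteq> (\<gamma> ^^ nat n) ` dcone l z" using UB by (rule image_mono)
      then show ?thesis unfolding v using d UB by blast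
    next
      case False
      show ?thesis
      proof (cases "n = 0")
        case True then show ?thesis using ne by (simp add: vpow_def)
      next
        case False
        then have n: "n < 0" using \<open>\<not> 0 < n\<close> by simp
        then have v: "vpow \<gamma> n = vinv \<gamma> ^^ nat (- n)" by (simp add: vpow_def)
        define m where "m = nat (- n)"
        have m: "m \<ge> 1" using n m_def by simp
        show ?thesis
        proof (rule ccontr)
          assume "vpow \<gamma> n ` U \<inter> U \<noteq> {}"
          then obtain w where w1: "w \<in> U" and w2: "vpow \<gamma> n w \<in> U" by blast
          have w2': "(vinv \<gamma> ^^ m) w \<in> U" using w2 unfolding v m_def .
          have wc: "w \<in> circle" using w1 Uc by blast
          have e: "(\<gamma> ^^ m) ((vinv \<gamma> ^^ m) w) = w" using funpow_inv[OF G wc] .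
          have "(vinv \<gamma> ^^ m) w \<in> dcone l z" using w2' UB by blast
          then have "(\<gamma> ^^ m) ((vinv \<gamma> ^^ m) w) \<in> (\<gamma> ^^ m) ` dcone l z" by (rule imageI)
          then have "w \<in> (\<gamma> ^^ m) ` dcone l z \<inter> dcone l z" using e w1 UB by auto
          then have "(\<gamma> ^^ m) ` dcone l z \<inter> dcone l z \<noteq> {}" by blast
          then show False using W m unfolding fwd_wand_def by blast
        qed
      qed
    qed
  qed
  show ?thesis using Une op wd by blast
qed


end
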